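(* Let $R\subseteq S$, $\sigma$ be as in the context, and $n=n_1+\cdots+n_\ell$. Let $\mathbf{a}=(a_1,\ldots,a_\ell)\in(S^* )^\ell$ and $\beta_{i,j}\in S$ ($1\le i\le\ell$, $1\le j\le n_i$) satisfy: (i) $a_i-a_j^\beta\in S^*$ for all $\beta\in S^*$ and $1\le i<j\le\ell$; (ii) for each $i$, $\beta_{i,1},\ldots,\beta_{i,n_i}$ are $R$-linearly independent. Let $c_{i,j}\in S$ for $1\le j\le n_i$, $1\le i\le\ell$. Then there exists a unique skew polynomial $F\in S[x;\sigma]$ with $\deg(F)\le n-1$ and $F_{a_i}(\beta_{i,j})=c_{i,j}$ for all $1\le j\le n_i$, $1\le i\le\ell$.
   Context: $R$ is a finite commutative chain ring with maximal ideal $\mathfrak{m}$, $q=|R/\mathfrak{m}|$; $S=R[x]/(h)$ with $h$ monic of degree $m$ irreducible modulo $\mathfrak{m}$, local with maximal ideal $\mathfrak{M}=\mathfrak{m}S$ and unit group $S^*=S\setminus\mathfrak{M}$. $\sigma$ is a ring automorphism of $S$ generating the Galois group of $R\subseteq S$, with fixed ring $R$, reducing modulo $\mathfrak{M}$ to $y\mapsto y^q$. $S[x;\sigma]$ is the skew polynomial ring with $xa=\sigma(a)x$; the zero polynomial has degree $-\infty$. For $a,\beta\in S$: $N_i(a)=\sigma^{i-1}(a)\cdots\sigma(a)a$, $\mathcal{D}_a^i(\beta)=\sigma^i(\beta)N_i(a)$, and for $F=\sum_iF_ix^i$, $F_a(\beta)=\sum_iF_i\mathcal{D}_a^i(\beta)$.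 For $\beta\in S^*$, $a^\beta=\sigma(\beta)a\beta^{-1}$. *)

theory Defs
  imports "HOL-Computational_Algebra.Polynomial"
begin

text \<open>The ring S is the ambient type 'a; the subring R is a carrier set R of elements of 'a.\<close>

definition subring_set :: "'a::comm_ring_1 set \<Rightarrow> bool" where
  "subring_set R \<longleftrightarrow> 0 \<in> R \<and> 1 \<in> R \<and>
     (\<forall>x\<in>R. \<forall>y\<in>R. x + y \<in> R \<and> x - y \<in> R \<and> x * y \<in> R)"

definition ideal_in :: "'a::comm_ring_1 set \<Rightarrow> 'a set \<Rightarrow> bool" where
  "ideal_in R I \<longleftrightarrow> I \<subseteq> R \<and> 0 \<in> I \<and>
     (\<forall>x\<in>I. \<forall>y\<in>I. x + y \<in> I) \<and> (\<forall>r\<in>R. \<forall>x\<in>I. r * x \<in> I)"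

definition chain_ring :: "'a::comm_ring_1 set \<Rightarrow> bool" where
  "chain_ring R \<longleftrightarrow> subring_set R \<and> finite R \<and> (0::'a) \<noteq> 1 \<and>
     (\<forall>I J. ideal_in R I \<and> ideal_in R J \<longrightarrow> I \<subseteq> J \<or> J \<subseteq> I)"

definition max_ideal :: "'a::comm_ring_1 set \<Rightarrow> 'a set" where
  "max_ideal R = {x \<in> R. \<not> (\<exists>y\<in>R. x * y = 1)}"

definition residue_card :: "'a::comm_ring_1 set \<Rightarrow> nat" where
  "residue_card R = card ((\<lambda>x. {y \<in> R. x - y \<in> max_ideal R}) ` R)"

definition poly_over :: "'a::comm_ring_1 set \<Rightarrow> 'a poly \<Rightarrow> bool" where
  "poly_over R p \<longleftrightarrow> (\<forall>i. coeff p i \<in> R)"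

definition irreducible_mod_max :: "'a::comm_ring_1 set \<Rightarrow> 'a poly \<Rightarrow> bool" where
  "irreducible_mod_max R h \<longleftrightarrow> degree h \<ge> 1 \<and>
     \<not> (\<exists>f g. poly_over R f \<and> poly_over R g \<and> lead_coeff f = 1 \<and> lead_coeff g = 1 \<and>
            degree f \<ge> 1 \<and> degree g \<ge> 1 \<and> (\<forall>i. coeff (h - f * g) i \<in> max_ideal R))"

text \<open>S (= UNIV) is R[x]/(h): h monic over R, irreducible mod m, and there is a root theta of h
  such that evaluation at theta is a bijection from the R-polynomials of degree < deg h onto S.\<close>
definition is_quot_by :: "'a::comm_ring_1 set \<Rightarrow> 'a poly \<Rightarrow> bool" where
  "is_quot_by R h \<longleftrightarrow> poly_over R h \<and> lead_coeff h = 1 \<and> irreducible_mod_max R h \<and>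
     (\<exists>\<theta>. poly h \<theta> = 0 \<and>
        bij_betw (\<lambda>p. poly p \<theta>) {p. poly_over R p \<and> degree p < degree h} (UNIV :: 'a set))"

definition ring_aut :: "('a::comm_ring_1 \<Rightarrow> 'a) \<Rightarrow> bool" where
  "ring_aut \<tau> \<longleftrightarrow> bij \<tau> \<and> \<tau> 1 = 1 \<and> (\<forall>x y. \<tau> (x + y) = \<tau> x + \<tau> y \<and> \<tau> (x * y) = \<tau> x * \<tau> y)"

definition galois_group :: "'a::comm_ring_1 set \<Rightarrow> ('a \<Rightarrow> 'a) set" where
  "galois_group R = {\<tau>. ring_aut \<tau> \<and> (\<forall>r\<in>R. \<tau> r = r)}"

text \<open>Maximal ideal M = mS of the local ring S; S* = S - M are the units.\<close>
definition max_ideal_S :: "'a::comm_ring_1 set" where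
  "max_ideal_S = {s. \<not> s dvd 1}"

definition galois_ctx :: "'a::{comm_ring_1,finite} set \<Rightarrow> 'a poly \<Rightarrow> ('a \<Rightarrow> 'a) \<Rightarrow> bool" where
  "galois_ctx R h \<sigma> \<longleftrightarrow> chain_ring R \<and> is_quot_by R h \<and>
     \<sigma> \<in> galois_group R \<and> (\<forall>\<tau>\<in>galois_group R. \<exists>k. \<tau> = \<sigma> ^^ k) \<and>
     {s. \<sigma> s = s} = R \<and>
     (\<forall>y. \<sigma> y - y ^ residue_card R \<in> max_ideal_S)"

definition unit_inv :: "'a::comm_ring_1 \<Rightarrow> 'a" where
  "unit_inv b = (SOME g. b * g = 1)"

text \<open>a^beta = sigma(beta) a beta^{-1}.\<close>
definition sconj :: "('a::comm_ring_1 \<Rightarrow> 'a) \<Rightarrow> 'a \<Rightarrow> 'a \<Rightarrow> 'a" where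
  "sconj \<sigma> a b = \<sigma> b * a * unit_inv b"

definition Nnorm :: "('a::comm_ring_1 \<Rightarrow> 'a) \<Rightarrow> nat \<Rightarrow> 'a \<Rightarrow> 'a" where
  "Nnorm \<sigma> i a = (\<Prod>k<i. (\<sigma> ^^ k) a)"

definition Dop :: "('a::comm_ring_1 \<Rightarrow> 'a) \<Rightarrow> 'a \<Rightarrow> nat \<Rightarrow> 'a \<Rightarrow> 'a" where
  "Dop \<sigma> a i b = (\<sigma> ^^ i) b * Nnorm \<sigma> i a"

text \<open>Skew polynomials F = sum F_i x^i in S[x;sigma] are represented by their coefficient
  sequence (an 'a poly, used only as a container of coefficients).
  F_a(beta) = sum_i F_i D_a^i(beta).\<close>
definition skew_eval :: "('a::comm_ring_1 \<Rightarrow> 'a) \<Rightarrow> 'a poly \<Rightarrow> 'a \<Rightarrow> 'a \<Rightarrow> 'a" where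
  "skew_eval \<sigma> F a b = (\<Sum>i\<le>degree F. coeff F i * Dop \<sigma> a i b)"

definition R_lin_indep :: "'a::comm_ring_1 set \<Rightarrow> nat \<Rightarrow> (nat \<Rightarrow> 'a) \<Rightarrow> bool" where
  "R_lin_indep R k v \<longleftrightarrow> (\<forall>r. (\<forall>j\<in>{1..k}. r j \<in> R) \<and> (\<Sum>j=1..k. r j * v j) = 0
       \<longrightarrow> (\<forall>j\<in>{1..k}. r j = 0))"

end

theory Submission
  imports Defs "HOL-Library.FuncSet"
begin

lemma sub_closed:
  assumes "subring_set R" "x \<in> R" "y \<in> R"
  shows "x + y \<in> R" "x - y \<in> R" "x * y \<in> R" "0 \<in> R" "1 \<in> R" "- x \<in> R"
proof -
  show "x + y \<in> R" "x - y \<in> R" "x * y \<in> R" "0 \<in> R" "1 \<in> R"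
    using assms unfolding subring_set_def by auto
  have "0 - x \<in> R" using assms unfolding subring_set_def by auto
  then show "- x \<in> R" by simp
qed

lemma sub_pow: "subring_set R \<Longrightarrow> x \<in> R \<Longrightarrow> x ^ n \<in> R"
  by (induction n) (auto intro: sub_closed)

lemma sub_sum: "subring_set R \<Longrightarrow> (\<And>i. i \<in> A \<Longrightarrow> f i \<in> R) \<Longrightarrow> sum f A \<in> R"
proof (induction A rule: infinite_finite_induct)
  case (infinite A) then show ?case by (simp add: subring_set_def)
next
  case empty then show ?case by (simp add: subring_set_def)
next
  case (insert x F) then show ?case by (simp add: sub_closed)
qed

definition pid :: "'a::comm_ring_1 set \<Rightarrow> 'a \<Rightarrow> 'a set" where
  "pid R x = {x * r | r. r \<in> R}"

lemma sub_one: "subring_set R \<Longrightarrow> 1 \<in> R" by (simp add: subring_set_def)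
lemma sub_zero: "subring_set R \<Longrightarrow> 0 \<in> R" by (simp add: subring_set_def)
lemma pid_self: "subring_set R \<Longrightarrow> x \<in> pid R x"
  unfolding pid_def using sub_one by force

lemma pid_ideal: "subring_set R \<Longrightarrow> x \<in> R \<Longrightarrow> ideal_in R (pid R x)"
  unfolding ideal_in_def pid_def
  apply (intro conjI)
     apply (auto intro: sub_closed)
   apply (metis mult_zero_right sub_closed(4))
  apply (metis distrib_left sub_closed(1))
  by (metis mult.left_commute sub_closed(3))

lemma chain_sub: "chain_ring R \<Longrightarrow> subring_set R"
  unfolding chain_ring_def by auto

lemma max_ideal_add:
  assumes cr: "chain_ring R" and x: "x \<in> max_ideal R" and y: "y \<in> max_ideal R"
  shows "x + y \<in> max_ideal R"
proof -
  have sR: "subring_set R" using cr chain_sub by auto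
  have xR: "x \<in> R" and yR: "y \<in> R" using x y unfolding max_ideal_def by auto
  have "pid R x \<subseteq> pid R y \<or> pid R y \<subseteq> pid R x"
    using cr pid_ideal[OF sR xR] pid_ideal[OF sR yR] unfolding chain_ring_def by blast
  moreover have "x \<in> pid R x" "y \<in> pid R y" using sR pid_self by auto
  ultimately have "(\<exists>t\<in>R. x = y * t) \<or> (\<exists>t\<in>R. y = x * t)" unfolding pid_def by blast
  then show ?thesis
  proof
    assume "\<exists>t\<in>R. x = y * t"
    then obtain t where t: "t \<in> R" "x = y * t" by auto
    have "x + y = y * (t + 1)" using t by (simp add: algebra_simps)
    moreover have "t + 1 \<in> R" using t sR by (auto intro: sub_closed)
    ultimately show ?thesis using x y sR unfolding max_ideal_def
      by (auto intro: sub_closed) (metis mult.assoc sub_closed(3))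
  next
    assume "\<exists>t\<in>R. y = x * t"
    then obtain t where t: "t \<in> R" "y = x * t" by auto
    have "x + y = x * (t + 1)" using t by (simp add: algebra_simps)
    moreover have "t + 1 \<in> R" using t sR by (auto intro: sub_closed)
    ultimately show ?thesis using x y sR unfolding max_ideal_def
      by (auto intro: sub_closed) (metis mult.assoc sub_closed(3))
  qed
qed

lemma max_ideal_mult:
  assumes "subring_set R" "r \<in> R" "x \<in> max_ideal R"
  shows "r * x \<in> max_ideal R"
  using assms unfolding max_ideal_def
  by (auto intro: sub_closed) (metis mult.assoc mult.commute sub_closed(3))

lemma max_ideal_0: "chain_ring R \<Longrightarrow> 0 \<in> max_ideal R"
  unfolding max_ideal_def chain_ring_def subring_set_def by auto

lemma max_ideal_1: "1 \<notin> max_ideal R"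
  unfolding max_ideal_def by auto

lemma not_max_unit: "x \<in> R \<Longrightarrow> x \<notin> max_ideal R \<Longrightarrow> \<exists>y\<in>R. x * y = 1"
  unfolding max_ideal_def by auto

lemma max_ideal_principal:
  assumes cr: "chain_ring (R::'a::{comm_ring_1,finite} set)"
  shows "\<exists>p\<in>max_ideal R. \<forall>x\<in>max_ideal R. \<exists>r\<in>R. x = p * r"
proof -
  have sR: "subring_set R" using cr chain_sub by auto
  let ?m = "max_ideal R"
  have fin: "finite ?m" by simp
  have ne: "?m \<noteq> {}" using max_ideal_0[OF cr] by auto
  let ?M = "Max ((\<lambda>x. card (pid R x)) ` ?m)"
  have "?M \<in> (\<lambda>x. card (pid R x)) ` ?m" using fin ne by (intro Max_in) auto
  then obtain p where p: "p \<in> ?m" "card (pid R p) = ?M" by auto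
  have pR: "p \<in> R" using p unfolding max_ideal_def by auto
  show ?thesis
  proof (intro bexI[OF _ p(1)] ballI)
    fix x assume x: "x \<in> ?m"
    have xR: "x \<in> R" using x unfolding max_ideal_def by auto
    have "pid R x \<subseteq> pid R p \<or> pid R p \<subseteq> pid R x"
      using cr pid_ideal[OF sR xR] pid_ideal[OF sR pR] unfolding chain_ring_def by blast
    moreover have "card (pid R x) \<le> card (pid R p)"
      using p x fin by auto
    ultimately have "pid R x \<subseteq> pid R p"
      by (metis card_subset_eq finite order.refl order_antisym card_mono)
    moreover have "x \<in> pid R x" using sR pid_self by auto
    ultimately show "\<exists>r\<in>R. x = p * r" unfolding pid_def by blast
  qed
qed

lemma max_ideal_nilpotent:
  assumes cr: "chain_ring R" and x: "x \<in> max_ideal R"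
  shows "\<exists>k. x ^ k = (0::'a::{comm_ring_1,finite})"
proof -
  have sR: "subring_set R" using cr chain_sub by auto
  have xR: "x \<in> R" using x unfolding max_ideal_def by auto
  have "\<not> inj (\<lambda>i::nat. x ^ i)"
  proof
    assume "inj (\<lambda>i::nat. x ^ i)"
    then have "finite (UNIV :: nat set)"
      using finite_imageD[of "\<lambda>i::nat. x ^ i" UNIV] by simp
    then show False by simp
  qed
  then obtain i j where ij: "i \<noteq> j" "x ^ i = x ^ j" unfolding inj_def by auto
  then obtain i j where ij: "i < j" "x ^ i = x ^ j"
    by (metis linorder_neqE_nat)
  define d where "d = j - i"
  have d: "d \<ge> 1" "j = i + d" using ij unfolding d_def by auto
  have xd: "x ^ d \<in> max_ideal R"
  proof -
    have "x ^ d = x ^ (d - 1) * x" using d by (metis le_add_diff_inverse2 power_add power_one_right)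
    then show ?thesis using max_ideal_mult[OF sR sub_pow[OF sR xR] x] by simp
  qed
  have "1 - x ^ d \<notin> max_ideal R"
  proof
    assume "1 - x ^ d \<in> max_ideal R"
    then have "(1 - x ^ d) + x ^ d \<in> max_ideal R" using max_ideal_add[OF cr _ xd] by blast
    then show False using max_ideal_1[of R] by simp
  qed
  moreover have "1 - x ^ d \<in> R" using sR sub_pow[OF sR xR] by (auto intro: sub_closed)
  ultimately obtain y where y: "y \<in> R" "(1 - x ^ d) * y = 1" using not_max_unit by blast
  have "x ^ i * (1 - x ^ d) = 0" using ij d by (simp add: algebra_simps power_add)
  then have "x ^ i = 0" using y by (metis mult.assoc mult_1_right mult_zero_left)
  then show ?thesis by blast
qed


lemma po_0: "subring_set R \<Longrightarrow> poly_over R 0"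
  unfolding poly_over_def by (simp add: sub_zero)
lemma po_add: "subring_set R \<Longrightarrow> poly_over R p \<Longrightarrow> poly_over R q \<Longrightarrow> poly_over R (p + q)"
  unfolding poly_over_def by (simp add: sub_closed)
lemma po_diff: "subring_set R \<Longrightarrow> poly_over R p \<Longrightarrow> poly_over R q \<Longrightarrow> poly_over R (p - q)"
  unfolding poly_over_def by (simp add: sub_closed)
lemma po_mult: "subring_set R \<Longrightarrow> poly_over R p \<Longrightarrow> poly_over R q \<Longrightarrow> poly_over R (p * q)"
  unfolding poly_over_def by (auto simp: coeff_mult intro!: sub_sum sub_closed)
lemma po_monom: "subring_set R \<Longrightarrow> c \<in> R \<Longrightarrow> poly_over R (monom c d)"
  unfolding poly_over_def by (auto simp: coeff_monom sub_zero)
lemma po_smult: "subring_set R \<Longrightarrow> c \<in> R \<Longrightarrow> poly_over R p \<Longrightarrow> poly_over R (smult c p)"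
  unfolding poly_over_def by (auto simp: sub_closed)

lemma monic_div_aux:
  assumes sR: "subring_set R" and g: "poly_over R g" "lead_coeff g = 1" "degree g \<ge> 1"
  shows "poly_over R p \<Longrightarrow> \<exists>q r. poly_over R q \<and> poly_over R r \<and> p = g * q + r \<and> (r = 0 \<or> degree r < degree g)"
proof (induction "degree p" arbitrary: p rule: less_induct)
  case less
  show ?case
  proof (cases "degree p < degree g")
    case True
    then show ?thesis using less.prems po_0[OF sR] by (intro exI[of _ 0] exI[of _ p]) auto
  next
    case False
    then have pnz: "p \<noteq> 0" using g by auto
    define c where "c = lead_coeff p"
    define d where "d = degree p - degree g"
    have cnz: "c \<noteq> 0" using pnz unfolding c_def by auto
    have cR: "c \<in> R" using less.prems unfolding c_def poly_over_def by auto
    define p' where "p' = p - g * monom c d"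
    have dm: "degree (monom c d) = d" using cnz by (simp add: degree_monom_eq)
    have dp: "degree p = degree g + d" using False unfolding d_def by auto
    have deg1: "degree (g * monom c d) \<le> degree p"
      using degree_mult_le[of g "monom c d"] dm dp by simp
    have top: "coeff (g * monom c d) (degree p) = c"
      using coeff_mult_degree_sum[of g "monom c d"] dm dp g by simp
    have "\<forall>k\<ge>degree p. coeff p' k = 0"
    proof (intro allI impI)
      fix k assume k: "degree p \<le> k"
      show "coeff p' k = 0"
      proof (cases "k = degree p")
        case True then show ?thesis using top unfolding p'_def c_def by simp
      next
        case False
        then have "k > degree p" using k by auto
        then show ?thesis unfolding p'_def using deg1
          by (simp add: coeff_eq_0)
      qed
    qed
    moreover have "degree p \<ge> 1" using False g by auto
    ultimately have "degree p' \<le> degree p - 1"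
      by (intro degree_le) auto
    then have lt: "degree p' < degree p" using \<open>degree p \<ge> 1\<close> by auto
    have po': "poly_over R p'" unfolding p'_def
      using less.prems g sR cR by (intro po_diff po_mult po_monom) auto
    obtain q r where qr: "poly_over R q" "poly_over R r" "p' = g * q + r" "r = 0 \<or> degree r < degree g"
      using less.hyps[OF lt po'] by blast
    show ?thesis
    proof (intro exI conjI)
      show "poly_over R (q + monom c d)" using qr sR cR by (intro po_add po_monom) auto
      show "p = g * (q + monom c d) + r" using qr(3) unfolding p'_def by (simp add: algebra_simps)
    qed (use qr in auto)
  qed
qed

lemma monic_div:
  assumes sR: "subring_set R" and g: "poly_over R g" "lead_coeff g = 1" and p: "poly_over R p"
  shows "\<exists>q r. poly_over R q \<and> poly_over R r \<and> p = g * q + r \<and> (r = 0 \<or> degree r < degree g)"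
proof (cases "degree g = 0")
  case True
  then have "g = 1" using g by (metis coeff_pCons_0 degree_0_id one_pCons)
  then show ?thesis using p po_0[OF sR] by auto
next
  case False
  then show ?thesis using monic_div_aux[OF sR g] p by auto
qed


lemma mS_poly:
  assumes pm: "\<forall>x\<in>max_ideal R. \<exists>r\<in>R. x = pm * r"
  shows "(\<forall>i. coeff q i \<in> max_ideal R) \<Longrightarrow> \<exists>y. poly q \<theta> = pm * y"
proof (induction q rule: pCons_induct)
  case 0 then show ?case by (intro exI[of _ 0]) simp
next
  case (pCons x q0)
  have "\<forall>i. coeff q0 i \<in> max_ideal R"
  proof
    fix i show "coeff q0 i \<in> max_ideal R" using pCons.prems[rule_format, of "Suc i"] by simp
  qed
  then obtain y where y: "poly q0 \<theta> = pm * y" using pCons.IH by blast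
  have "x \<in> max_ideal R" using pCons.prems[rule_format, of 0] by simp
  then obtain r where "x = pm * r" using pm by blast
  then show ?case using y by (intro exI[of _ "r + \<theta> * y"]) (simp add: algebra_simps)
qed

lemma nilp_unit:
  fixes z :: "'a::comm_ring_1"
  assumes "z ^ e = 0" shows "(1 - z) dvd 1"
proof -
  have "1 - z ^ e = (1 - z) * (\<Sum>i<e. z^i)" by (rule one_diff_power_eq)
  then show ?thesis using assms by (metis diff_zero dvdI)
qed

lemma nonunit_in_piS:
  fixes R :: "'a::{comm_ring_1,finite} set"
  assumes cr: "chain_ring R" and hq: "is_quot_by R h"
    and pm: "\<forall>x\<in>max_ideal R. \<exists>r\<in>R. x = pm * r" and nil: "pm ^ e = 0"
    and s: "\<not> s dvd 1"
  shows "\<exists>y. s = pm * y"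
proof -
  have sR: "subring_set R" using cr chain_sub by auto
  have z1: "(0::'a) \<noteq> 1" using cr unfolding chain_ring_def by auto
  obtain \<theta> where th: "poly h \<theta> = 0"
    and bij: "bij_betw (\<lambda>p. poly p \<theta>) {p. poly_over R p \<and> degree p < degree h} (UNIV :: 'a set)"
    using hq unfolding is_quot_by_def by blast
  have hR: "poly_over R h" and hm: "lead_coeff h = 1" and irr: "irreducible_mod_max R h"
    using hq unfolding is_quot_by_def by auto
  define inJ where "inJ x \<longleftrightarrow> (\<exists>t y. x = s * t + pm * y)" for x
  have notJ1: "\<not> inJ 1"
  proof
    assume "inJ 1"
    then obtain t y where ty: "1 = s * t + pm * y" unfolding inJ_def by blast
    have "(pm * y) ^ e = 0" using nil by (simp add: power_mult_distrib)
    then have "(1 - pm * y) dvd 1" by (rule nilp_unit)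
    moreover have "1 - pm * y = s * t" using ty by (simp add: algebra_simps)
    ultimately have "s dvd 1" by (metis dvd_mult_left)
    then show False using s by simp
  qed
  have J_mult: "inJ x \<Longrightarrow> inJ (x * z)" for x z
    unfolding inJ_def by (auto, metis (no_types, opaque_lifting) distrib_right mult.assoc)
  define P where "P d \<longleftrightarrow> (\<exists>g. poly_over R g \<and> lead_coeff g = 1 \<and> inJ (poly g \<theta>) \<and> degree g = d)" for d
  have J0: "inJ 0" unfolding inJ_def by (metis add_0 mult_zero_right)
  have Ph: "P (degree h)" unfolding P_def using hR hm th J0
    by (intro exI[of _ h]) auto
  define d0 where "d0 = (LEAST d. P d)"
  have Pd0: "P d0" unfolding d0_def using Ph by (rule LeastI)
  then obtain g where g: "poly_over R g" "lead_coeff g = 1" "inJ (poly g \<theta>)" "degree g = d0"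
    unfolding P_def by blast
  have minim: "degree g \<le> degree g'"
    if "poly_over R g'" "lead_coeff g' = 1" "inJ (poly g' \<theta>)" for g'
  proof -
    have "P (degree g')" unfolding P_def using that by blast
    then have "d0 \<le> degree g'" unfolding d0_def by (rule Least_le)
    then show ?thesis using g(4) by simp
  qed
  have C: "\<forall>i. coeff p i \<in> max_ideal R"
    if p: "poly_over R p" "inJ (poly p \<theta>)" "degree p < degree g" for p
  proof (rule ccontr)
    assume "\<not> (\<forall>i. coeff p i \<in> max_ideal R)"
    then obtain i0 where i0: "coeff p i0 \<notin> max_ideal R" by blast
    define K where "K = {i. coeff p i \<notin> max_ideal R}"
    have Ksub: "K \<subseteq> {..degree p}"
    proof
      fix i assume "i \<in> K"
      then have "coeff p i \<noteq> 0" using max_ideal_0[OF cr] unfolding K_def by auto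
      then show "i \<in> {..degree p}" using le_degree by auto
    qed
    have finK: "finite K" using Ksub finite_subset by blast
    have Kne: "K \<noteq> {}" using i0 unfolding K_def by auto
    define k where "k = Max K"
    have kK: "k \<in> K" unfolding k_def using finK Kne by (rule Max_in)
    have above: "\<And>i. i > k \<Longrightarrow> coeff p i \<in> max_ideal R"
      using Max_ge[OF finK] unfolding k_def K_def by fastforce
    define u where "u = coeff p k"
    have uR: "u \<in> R" and um: "u \<notin> max_ideal R" using kK p(1) unfolding u_def K_def poly_over_def by auto
    obtain u' where u': "u' \<in> R" "u * u' = 1" using not_max_unit[OF uR um] by blast
    have unz: "u \<noteq> 0" using um max_ideal_0[OF cr] by auto
    define plo where "plo = (\<Sum>j\<le>k. monom (coeff p j) j)"
    have cplo: "coeff plo i = (if i \<le> k then coeff p i else 0)" for i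
      unfolding plo_def by (simp add: coeff_sum coeff_monom)
    define phi where "phi = p - plo"
    have cphi: "\<forall>i. coeff phi i \<in> max_ideal R"
      unfolding phi_def using above max_ideal_0[OF cr] by (auto simp: cplo)
    obtain y1 where y1: "poly phi \<theta> = pm * y1" using mS_poly[OF pm cphi] by blast
    obtain t y where ty: "poly p \<theta> = s * t + pm * y" using p(2) unfolding inJ_def by blast
    have "poly plo \<theta> = s * t + pm * (y - y1)"
      using ty y1 unfolding phi_def by (simp add: algebra_simps)
    then have Jlo: "inJ (poly plo \<theta>)" unfolding inJ_def by blast
    define p' where "p' = smult u' plo"
    have Jp': "inJ (poly p' \<theta>)" unfolding p'_def using J_mult[OF Jlo, of u'] by (simp add: mult.commute)
    have ploR: "poly_over R plo" using p(1) sR unfolding poly_over_def by (auto simp: cplo sub_zero)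
    have p'R: "poly_over R p'" unfolding p'_def using po_smult[OF sR u'(1) ploR] .
    have cp': "coeff p' i = (if i \<le> k then u' * coeff p i else 0)" for i
      unfolding p'_def by (simp add: cplo)
    have ck: "coeff p' k = 1" using cp' u' unfolding u_def by (simp add: mult.commute)
    have dp': "degree p' = k"
    proof (rule antisym)
      show "degree p' \<le> k" by (rule degree_le) (auto simp: cp')
      show "k \<le> degree p'" using ck z1 by (intro le_degree) auto
    qed
    have "lead_coeff p' = 1" using dp' ck by simp
    then have "degree g \<le> k" using minim[OF p'R _ Jp'] dp' by simp
    moreover have "k \<le> degree p" using Ksub kK by auto
    ultimately show False using p(3) by simp
  qed
  have dgh: "degree g \<le> degree h" using minim[OF hR hm] th unfolding inJ_def
    by (metis add.right_neutral mult_zero_right)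
  have dg1: "degree g \<ge> 1"
  proof (rule ccontr)
    assume "\<not> degree g \<ge> 1"
    then have "g = 1" using g(2) by (metis coeff_pCons_0 degree_0_id one_pCons less_one not_le)
    then show False using g(3) notJ1 by simp
  qed
  have dgeq: "degree g = degree h"
  proof (rule ccontr)
    assume ne: "degree g \<noteq> degree h"
    obtain q r where qr: "poly_over R q" "poly_over R r" "h = g * q + r" "r = 0 \<or> degree r < degree g"
      using monic_div[OF sR g(1,2) hR] by blast
    have "poly r \<theta> = poly g \<theta> * (- poly q \<theta>)" using qr(3) th
      by (simp add: algebra_simps eq_neg_iff_add_eq_0)
    then have Jr: "inJ (poly r \<theta>)" using J_mult[OF g(3), of "- poly q \<theta>"] by metis
    have rm: "\<forall>i. coeff r i \<in> max_ideal R"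
      using qr(4) C[OF qr(2) Jr] max_ideal_0[OF cr] by auto
    have qnz: "q \<noteq> 0"
    proof
      assume "q = 0"
      then have "h = r" using qr(3) by simp
      then show False using qr(4) hm ne dgh by auto
    qed
    have lq: "lead_coeff q \<noteq> 0" using qnz by simp
    have cgq: "coeff (g * q) (degree g + degree q) = lead_coeff q"
      using coeff_mult_degree_sum[of g q] g(2) by simp
    have dgq: "degree (g * q) = degree g + degree q"
    proof (rule antisym)
      show "degree (g * q) \<le> degree g + degree q" by (rule degree_mult_le)
      show "degree g + degree q \<le> degree (g * q)" using cgq lq by (intro le_degree) simp
    qed
    have rlt: "r = 0 \<or> degree r < degree (g * q)" using qr(4) dgq by auto
    have dh: "degree h = degree g + degree q"
      using qr(3) rlt dgq by (metis add.right_neutral degree_add_eq_left)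
    have "coeff h (degree g + degree q) = lead_coeff q"
      using qr(3) cgq rlt dgq by (auto simp: coeff_eq_0)
    then have lq1: "lead_coeff q = 1" using hm dh by simp
    have dq1: "degree q \<ge> 1" using dh dgh ne by auto
    have "\<forall>i. coeff (h - g * q) i \<in> max_ideal R" using qr(3) rm by simp
    then show False using irr g(1,2) qr(1) lq1 dg1 dq1 unfolding irreducible_mod_max_def by blast
  qed
  have "s \<in> (\<lambda>p. poly p \<theta>) ` {p. poly_over R p \<and> degree p < degree h}"
    using bij unfolding bij_betw_def by auto
  then obtain p where p: "poly_over R p" "degree p < degree h" "s = poly p \<theta>" by auto
  have "inJ (poly p \<theta>)" using p(3) unfolding inJ_def by (metis add.right_neutral mult_1_right mult_zero_right)
  then have "\<forall>i. coeff p i \<in> max_ideal R" using C[OF p(1)] p(2) dgeq by simp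
  then show ?thesis using mS_poly[OF pm] p(3) by blast
qed


lemma decomp:
  fixes R :: "'a::{comm_ring_1,finite} set"
  assumes cr: "chain_ring R" and hq: "is_quot_by R h"
  shows "\<exists>r\<in>R. \<exists>w. w dvd 1 \<and> s = r * w"
proof -
  have sR: "subring_set R" using cr chain_sub by auto
  obtain pm where pm: "pm \<in> max_ideal R" "\<forall>x\<in>max_ideal R. \<exists>r\<in>R. x = pm * r"
    using max_ideal_principal[OF cr] by blast
  obtain e where e: "pm ^ e = 0" using max_ideal_nilpotent[OF cr pm(1)] by blast
  have pmR: "pm \<in> R" using pm(1) unfolding max_ideal_def by auto
  have claim: "\<forall>s. (\<exists>r\<in>R. \<exists>w. w dvd 1 \<and> s = r * w) \<or> (\<exists>y. s = pm ^ k * y)" for k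
  proof (induction k)
    case 0 then show ?case by simp
  next
    case (Suc k)
    show ?case
    proof
      fix s
      show "(\<exists>r\<in>R. \<exists>w. w dvd 1 \<and> s = r * w) \<or> (\<exists>y. s = pm ^ Suc k * y)"
      proof (cases "\<exists>r\<in>R. \<exists>w. w dvd 1 \<and> s = r * w")
        case True then show ?thesis by blast
      next
        case False
        then obtain y where y: "s = pm ^ k * y" using Suc.IH[rule_format, of s] by blast
        show ?thesis
        proof (cases "y dvd 1")
          case True
          then show ?thesis using y sub_pow[OF sR pmR, of k] by (intro disjI1 bexI[of _ "pm ^ k"] exI[of _ y]) auto
        next
          case False
          then obtain y' where "y = pm * y'" using nonunit_in_piS[OF cr hq pm(2) e] by blast
          then have "s = pm ^ Suc k * y'" using y by (simp add: algebra_simps)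
          then show ?thesis by (intro disjI2 exI[of _ y'])
        qed
      qed
    qed
  qed
  have "(\<exists>r\<in>R. \<exists>w. w dvd 1 \<and> s = r * w) \<or> (\<exists>y. s = pm ^ e * y)" using claim[of e] by (rule spec)
  moreover have "\<exists>r\<in>R. \<exists>w. w dvd 1 \<and> s = r * w" if "s = pm ^ e * y" for y
  proof -
    have "s = 0 * 1" using that e by simp
    then show ?thesis using sub_zero[OF sR] by (intro bexI[of _ 0] exI[of _ 1] conjI) auto
  qed
  ultimately show ?thesis by (elim disjE exE) auto
qed

lemma annih:
  fixes R :: "'a::{comm_ring_1,finite} set"
  assumes cr: "chain_ring R" and hq: "is_quot_by R h" and b: "\<not> b dvd 1"
  shows "\<exists>r\<in>R. r \<noteq> 0 \<and> r * b = 0"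
proof -
  have sR: "subring_set R" using cr chain_sub by auto
  have z1: "(0::'a) \<noteq> 1" using cr unfolding chain_ring_def by auto
  obtain r w where rw: "r \<in> R" "w dvd 1" "b = r * w" using decomp[OF cr hq] by blast
  have rm: "r \<in> max_ideal R"
  proof (rule ccontr)
    assume "r \<notin> max_ideal R"
    then obtain y where "r * y = 1" using not_max_unit[OF rw(1)] by blast
    then have "r dvd 1" by (metis dvdI)
    then show False using b rw mult_dvd_mono[of r 1 w 1] by simp
  qed
  obtain k where "r ^ k = 0" using max_ideal_nilpotent[OF cr rm] by blast
  then obtain k where k: "r ^ k = 0" "\<forall>j<k. r ^ j \<noteq> 0"
    using exists_least_iff[of "\<lambda>k. r ^ k = 0"] by blast
  have "k \<noteq> 0" using k z1 by (intro notI) simp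
  then obtain j where j: "k = Suc j" by (cases k) auto
  show ?thesis
  proof (intro bexI conjI)
    show "r ^ j \<noteq> 0" using k j by auto
    have "r ^ j * b = (r * r ^ j) * w" using rw(3) by (simp add: algebra_simps)
    then show "r ^ j * b = 0" using k(1) j by simp
    show "r ^ j \<in> R" using sub_pow[OF sR rw(1)] .
  qed
qed


lemma ra_add: "ring_aut s \<Longrightarrow> s (x + y) = s x + s y" unfolding ring_aut_def by auto
lemma ra_mult: "ring_aut s \<Longrightarrow> s (x * y) = s x * s y" unfolding ring_aut_def by auto
lemma ra_one: "ring_aut s \<Longrightarrow> s 1 = 1" unfolding ring_aut_def by auto
lemma ra_zero: "ring_aut s \<Longrightarrow> s (0::'a::comm_ring_1) = 0"
proof -
  assume "ring_aut s"
  then have "s (0 + 0) = s 0 + s 0" by (rule ra_add)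
  then show ?thesis by simp
qed
lemma ra_minus: "ring_aut s \<Longrightarrow> s (- x::'a::comm_ring_1) = - s x"
proof -
  assume a: "ring_aut s"
  then have "s (x + - x) = s x + s (- x)" by (rule ra_add)
  then have "s x + s (- x) = 0" using ra_zero[OF a] by simp
  then show ?thesis by (simp add: eq_neg_iff_add_eq_0 add.commute)
qed
lemma ra_diff: "ring_aut s \<Longrightarrow> s (x - y::'a::comm_ring_1) = s x - s y"
  using ra_add[of s x "- y"] ra_minus[of s y] by simp
lemma ra_sum: "ring_aut s \<Longrightarrow> s (sum f A::'a::comm_ring_1) = (\<Sum>i\<in>A. s (f i))"
  by (induction A rule: infinite_finite_induct) (auto simp: ra_zero ra_add)
lemma ra_unit: "ring_aut s \<Longrightarrow> (x::'a::comm_ring_1) dvd 1 \<Longrightarrow> s x dvd 1"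
proof -
  assume a: "ring_aut s" "x dvd 1"
  then obtain y where "1 = x * y" by (auto elim: dvdE)
  then have "1 = s x * s y" using ra_mult[OF a(1), of x y] ra_one[OF a(1)] by simp
  then show ?thesis by (rule dvdI)
qed
lemma ra_pow: "ring_aut s \<Longrightarrow> ring_aut (s ^^ k)"
proof (induction k)
  case 0 then show ?case unfolding ring_aut_def by auto
next
  case (Suc k)
  then show ?case unfolding ring_aut_def using bij_comp[of "s ^^ k" s] by auto
qed

definition ev :: "('a::comm_ring_1 \<Rightarrow> 'a) \<Rightarrow> nat \<Rightarrow> (nat \<Rightarrow> 'a) \<Rightarrow> 'a \<Rightarrow> 'a \<Rightarrow> 'a" where
  "ev s N f x g = (\<Sum>k<N. f k * Dop s x k g)"

definition Hop :: "('a::comm_ring_1 \<Rightarrow> 'a) \<Rightarrow> 'a \<Rightarrow> 'a \<Rightarrow> 'a \<Rightarrow> 'a" where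
  "Hop s x b g = s g * x - b * g"

definition shape :: "('a::comm_ring_1 \<Rightarrow> 'a) \<Rightarrow> (nat \<Rightarrow> 'a) \<Rightarrow> 'a \<Rightarrow> nat \<Rightarrow> 'a" where
  "shape s Q b k = (if k = 0 then 0 else Q (k - 1)) - Q k * (s ^^ k) b"

lemma Nnorm_Suc: "Nnorm s (Suc k) x = (s ^^ k) x * Nnorm s k x"
  unfolding Nnorm_def by simp

lemma Dop_shift: "ring_aut s \<Longrightarrow> Dop s x k (s g * x) = Dop s x (Suc k) g"
proof -
  assume a: "ring_aut s"
  have "(s ^^ k) (s g * x) = (s ^^ Suc k) g * (s ^^ k) x"
    using ra_mult[OF ra_pow[OF a, of k]] by (simp add: funpow_swap1)
  then show ?thesis unfolding Dop_def Nnorm_Suc by (simp add: mult.assoc)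
qed

lemma Dop_mult: assumes a: "ring_aut s" shows "Dop s x k (y * g) = (s ^^ k) y * Dop s x k g"
  unfolding Dop_def using ra_mult[OF ra_pow[OF a]] by (simp add: mult.assoc)

lemma Dop_diff: assumes a: "ring_aut s" shows "Dop s x k (g1 - g2) = Dop s x k g1 - Dop s x k g2"
  unfolding Dop_def using ra_diff[OF ra_pow[OF a], of k g1 g2] by (simp add: left_diff_distrib)

lemma Dop_0: "Dop s x 0 g = g" unfolding Dop_def Nnorm_def by simp

lemma Dop_zero: assumes a: "ring_aut s" shows "Dop s x k 0 = 0"
  unfolding Dop_def using ra_zero[OF ra_pow[OF a]] by simp

lemma ev_shape:
  assumes a: "ring_aut s" and Q: "\<forall>k\<ge>N. Q k = 0"
  shows "ev s (Suc N) (shape s Q b) x g = ev s N Q x (Hop s x b g)"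
proof -
  have "ev s N Q x (Hop s x b g) = (\<Sum>k<N. Q k * (Dop s x (Suc k) g - (s ^^ k) b * Dop s x k g))"
    unfolding ev_def Hop_def using Dop_diff[OF a] Dop_shift[OF a] Dop_mult[OF a] by simp
  also have "\<dots> = (\<Sum>k<N. Q k * Dop s x (Suc k) g) - (\<Sum>k<N. Q k * (s ^^ k) b * Dop s x k g)"
    by (simp add: sum_subtractf algebra_simps)
  also have "(\<Sum>k<N. Q k * Dop s x (Suc k) g) = (\<Sum>k<Suc N. (if k = 0 then 0 else Q (k - 1)) * Dop s x k g)"
    by (subst sum.lessThan_Suc_shift) simp
  also have "(\<Sum>k<N. Q k * (s ^^ k) b * Dop s x k g) = (\<Sum>k<Suc N. Q k * (s ^^ k) b * Dop s x k g)"
    using Q by simp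
  finally show ?thesis unfolding ev_def shape_def by (simp add: sum_subtractf algebra_simps)
qed

lemma shape_div:
  assumes f: "\<forall>k>N. f k = 0"
  shows "\<exists>Q r. (\<forall>k\<ge>N. Q k = 0) \<and> (\<forall>k. f k = shape s Q b k + (if k = 0 then r else 0))"
proof -
  define G where "G = rec_nat 0 (\<lambda>d g. f (N - d) + g * (s ^^ (N - d)) b)"
  have G0: "G 0 = 0" unfolding G_def by simp
  have GS: "G (Suc d) = f (N - d) + G d * (s ^^ (N - d)) b" for d unfolding G_def by simp
  define Q where "Q k = (if k < N then G (N - k) else 0)" for k
  define r where "r = f 0 + Q 0 * b"
  show ?thesis
  proof (intro exI conjI allI impI)
    fix k show "k \<ge> N \<Longrightarrow> Q k = 0" unfolding Q_def by simp
  next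
    fix k
    show "f k = shape s Q b k + (if k = 0 then r else 0)"
    proof (cases "k = 0")
      case True then show ?thesis unfolding shape_def r_def by simp
    next
      case False
      show ?thesis
      proof (cases "k \<le> N")
        case True
        have "Q (k - 1) = G (Suc (N - k))" unfolding Q_def using True False
          by (simp add: Suc_diff_le)
        also have "\<dots> = f k + G (N - k) * (s ^^ k) b" using GS True by simp
        finally have "Q (k - 1) = f k + Q k * (s ^^ k) b"
          unfolding Q_def using True G0 by (cases "k < N") auto
        then show ?thesis unfolding shape_def using False by simp
      next
        case False
        then show ?thesis using f \<open>k \<noteq> 0\<close> unfolding shape_def Q_def by simp
      qed
    qed
  qed
qed

lemma ev_add: "ev s N (\<lambda>k. f k + g k) x y = ev s N f x y + ev s N g x y"
  unfolding ev_def by (simp add: sum.distrib algebra_simps)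

lemma ev_delta: "ev s (Suc N) (\<lambda>k. if k = 0 then r else 0) x y = r * y"
proof -
  have "ev s (Suc N) (\<lambda>k. if k = 0 then r else 0) x y = (\<Sum>k<Suc N. if k = 0 then r * Dop s x k y else 0)"
    unfolding ev_def by (intro sum.cong) auto
  also have "\<dots> = r * y" by (simp add: sum.delta Dop_0)
  finally show ?thesis .
qed

lemma ev_div:
  assumes a: "ring_aut s" and f: "\<forall>k>N. f k = 0"
  shows "\<exists>Q r. (\<forall>k\<ge>N. Q k = 0) \<and> (\<forall>k. f k = shape s Q b k + (if k = 0 then r else 0)) \<and>
     (\<forall>x y. ev s (Suc N) f x y = ev s N Q x (Hop s x b y) + r * y)"
proof -
  obtain Q r where Qr: "\<forall>k\<ge>N. Q k = 0" "\<forall>k. f k = shape s Q b k + (if k = 0 then r else 0)"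
    using shape_div[OF f] by blast
  have "ev s (Suc N) f x y = ev s N Q x (Hop s x b y) + r * y" for x y
  proof -
    have "f = (\<lambda>k. shape s Q b k + (if k = 0 then r else 0))" using Qr(2) by auto
    then have "ev s (Suc N) f x y = ev s (Suc N) (shape s Q b) x y + r * y"
      using ev_add[of s "Suc N" "shape s Q b" "\<lambda>k. if k = 0 then r else 0" x y] ev_delta by simp
    then show ?thesis using ev_shape[OF a Qr(1)] by simp
  qed
  then show ?thesis using Qr by blast
qed

lemma ev_zero: "ring_aut s \<Longrightarrow> ev s N f x 0 = 0"
  unfolding ev_def by (simp add: Dop_zero)

lemma skew_ev:
  assumes "\<forall>k\<ge>N. coeff F k = 0"
  shows "skew_eval s F x y = ev s N (coeff F) x y"
proof (cases "F = 0")
  case True then show ?thesis unfolding skew_eval_def ev_def by simp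
next
  case False
  then have "degree F < N" using assms by (metis leading_coeff_0_iff not_le)
  then have "{..degree F} \<subseteq> {..<N}" by auto
  then show ?thesis unfolding skew_eval_def ev_def
    by (intro sum.mono_neutral_left) (auto simp: coeff_eq_0)
qed


lemma unit_inv_r: "(b::'a::comm_ring_1) dvd 1 \<Longrightarrow> b * unit_inv b = 1"
proof -
  assume "b dvd 1"
  then obtain k where "1 = b * k" by (auto elim: dvdE)
  then have "\<exists>g. b * g = 1" by metis
  then show ?thesis unfolding unit_inv_def by (rule someI_ex)
qed

lemma unit_inv_eq: "(b::'a::comm_ring_1) * c = 1 \<Longrightarrow> unit_inv b = c"
proof -
  assume bc: "b * c = 1"
  then have "b dvd 1" by (metis dvdI)
  then have bi: "b * unit_inv b = 1" by (rule unit_inv_r)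
  have "unit_inv b = unit_inv b * (b * c)" using bc by simp
  also have "\<dots> = (b * unit_inv b) * c" by (simp add: algebra_simps)
  also have "\<dots> = c" using bi by simp
  finally show ?thesis .
qed

context
  fixes R :: "'a::comm_ring_1 set" and s :: "'a \<Rightarrow> 'a"
  assumes sR: "subring_set R" and aut: "ring_aut s"
    and fixR: "\<forall>r\<in>R. s r = r" and fixS: "\<forall>x. s x = x \<longrightarrow> x \<in> R"
    and dec: "\<forall>y. \<exists>r\<in>R. \<exists>w. w dvd 1 \<and> y = r * w"
    and ann: "\<forall>y. \<not> y dvd 1 \<longrightarrow> (\<exists>r\<in>R. r \<noteq> 0 \<and> r * y = 0)"
begin

lemma Hop_rmult: "r \<in> R \<Longrightarrow> Hop s x b (r * g) = r * Hop s x b g"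
  unfolding Hop_def using ra_mult[OF aut] fixR by (simp add: algebra_simps)

lemma Hop_lin: "(\<forall>j\<in>A. r j \<in> R) \<Longrightarrow> Hop s x b (\<Sum>j\<in>A. r j * v j) = (\<Sum>j\<in>A. r j * Hop s x b (v j))"
proof -
  assume rR: "\<forall>j\<in>A. r j \<in> R"
  have "Hop s x b (\<Sum>j\<in>A. r j * v j) = (\<Sum>j\<in>A. s (r j * v j) * x - b * (r j * v j))"
    unfolding Hop_def by (simp add: ra_sum[OF aut] sum_distrib_left sum_distrib_right sum_subtractf)
  also have "\<dots> = (\<Sum>j\<in>A. r j * Hop s x b (v j))"
  proof (intro sum.cong refl)
    fix j assume "j \<in> A"
    then have "Hop s x b (r j * v j) = r j * Hop s x b (v j)" using rR Hop_rmult by blast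
    then show "s (r j * v j) * x - b * (r j * v j) = r j * Hop s x b (v j)" unfolding Hop_def .
  qed
  finally show ?thesis .
qed

lemma ker_triv:
  assumes U: "\<forall>w. w dvd 1 \<longrightarrow> Hop s x b w dvd 1" and H: "Hop s x b g = 0"
  shows "g = 0"
proof -
  obtain r w where rw: "r \<in> R" "w dvd 1" "g = r * w" using dec by blast
  have "r * Hop s x b w = 0" using H rw Hop_rmult by simp
  moreover obtain k where "1 = Hop s x b w * k" using U rw(2) by (meson dvdE)
  ultimately have "r = 0" by (metis mult.assoc mult_1_right mult_zero_left)
  then show ?thesis using rw by simp
qed

lemma ker_conj:
  assumes x: "x dvd 1" and b0: "b0 dvd 1" and H: "Hop s x (sconj s x b0) g = 0"
  shows "\<exists>t\<in>R. g = t * b0"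
proof -
  define i where "i = unit_inv b0"
  have bi: "b0 * i = 1" unfolding i_def using unit_inv_r[OF b0] .
  obtain xi where xi: "x * xi = 1" using x by (metis dvdE)
  have e: "s g * x = s b0 * x * i * g" using H unfolding Hop_def sconj_def i_def by simp
  have "s g = (s g * x) * xi" using xi by (metis mult.assoc mult_1_right)
  also have "\<dots> = (s b0 * i * g) * (x * xi)" using e by (simp add: algebra_simps)
  finally have sg: "s g = s b0 * i * g" using xi by simp
  define t where "t = g * i"
  have "s t = s g * s i" unfolding t_def using ra_mult[OF aut] by simp
  also have "\<dots> = (s b0 * s i) * i * g" using sg by (simp add: algebra_simps)
  also have "s b0 * s i = 1" using ra_mult[OF aut, of b0 i] ra_one[OF aut] bi by simp
  finally have "s t = t" unfolding t_def by (simp add: algebra_simps)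
  then have "t \<in> R" using fixS by blast
  moreover have "g = t * b0" unfolding t_def using bi by (metis mult.assoc mult.commute mult_1_right)
  ultimately show ?thesis by blast
qed

lemma indep_unit:
  assumes "R_lin_indep R n v" "1 \<le> n"
  shows "v 1 dvd 1"
proof (rule ccontr)
  assume "\<not> v 1 dvd 1"
  then obtain r where r: "r \<in> R" "r \<noteq> 0" "r * v 1 = 0" using ann by blast
  define rr where "rr = (\<lambda>j::nat. if j = 1 then r else 0)"
  have "\<forall>j\<in>{1..n}. rr j \<in> R" unfolding rr_def using r sub_zero[OF sR] by auto
  moreover have "(\<Sum>j=1..n. rr j * v j) = 0"
  proof -
    have "(\<Sum>j=1..n. rr j * v j) = (\<Sum>j=1..n. if j = 1 then r * v 1 else 0)"
      unfolding rr_def by (intro sum.cong) auto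
    also have "\<dots> = 0" using r(3) by simp
    finally show ?thesis .
  qed
  ultimately have "rr 1 = 0" using assms unfolding R_lin_indep_def by auto
  then show False using r unfolding rr_def by simp
qed

lemma indep_triv:
  assumes I: "R_lin_indep R n v" and K: "\<forall>g. Hop s x b g = 0 \<longrightarrow> g = 0"
  shows "R_lin_indep R n (\<lambda>j. Hop s x b (v j))"
  unfolding R_lin_indep_def
proof (intro allI impI)
  fix r assume r: "(\<forall>j\<in>{1..n}. r j \<in> R) \<and> (\<Sum>j = 1..n. r j * Hop s x b (v j)) = 0"
  then have "Hop s x b (\<Sum>j = 1..n. r j * v j) = 0" using Hop_lin[of "{1..n}" r x b v] by simp
  then have "(\<Sum>j = 1..n. r j * v j) = 0" using K by blast
  then show "\<forall>j\<in>{1..n}. r j = 0" using I r unfolding R_lin_indep_def by blast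
qed

lemma indep_conj:
  assumes I: "R_lin_indep R (Suc n) v" and x: "x dvd 1" and v1: "v 1 dvd 1"
  shows "R_lin_indep R n (\<lambda>j. Hop s x (sconj s x (v 1)) (v (Suc j)))"
  unfolding R_lin_indep_def
proof (intro allI impI)
  fix r assume r: "(\<forall>j\<in>{1..n}. r j \<in> R) \<and> (\<Sum>j = 1..n. r j * Hop s x (sconj s x (v 1)) (v (Suc j))) = 0"
  then have "Hop s x (sconj s x (v 1)) (\<Sum>j = 1..n. r j * v (Suc j)) = 0"
    using Hop_lin[of "{1..n}" r x "sconj s x (v 1)" "\<lambda>j. v (Suc j)"] by simp
  then obtain t where t: "t \<in> R" "(\<Sum>j = 1..n. r j * v (Suc j)) = t * v 1"
    using ker_conj[OF x v1] by blast
  define rr where "rr = (\<lambda>j::nat. if j = 1 then - t else r (j - 1))"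
  have rrR: "\<forall>j\<in>{1..Suc n}. rr j \<in> R"
  proof
    fix j assume j: "j \<in> {1..Suc n}"
    show "rr j \<in> R"
    proof (cases "j = 1")
      case True then show ?thesis unfolding rr_def using t sub_closed(6)[OF sR t(1) t(1)] by simp
    next
      case False then have "j - 1 \<in> {1..n}" using j by auto
      then show ?thesis unfolding rr_def using r False by simp
    qed
  qed
  have "(\<Sum>j = 1..Suc n. rr j * v j) = rr 1 * v 1 + (\<Sum>j = Suc 1..Suc n. rr j * v j)"
    by (rule sum.atLeast_Suc_atMost) simp
  also have "(\<Sum>j = Suc 1..Suc n. rr j * v j) = (\<Sum>j = 1..n. rr (Suc j) * v (Suc j))"
    by (rule sum.shift_bounds_cl_Suc_ivl)
  also have "\<dots> = (\<Sum>j = 1..n. r j * v (Suc j))" unfolding rr_def by (intro sum.cong) auto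
  finally have "(\<Sum>j = 1..Suc n. rr j * v j) = 0" using t unfolding rr_def by simp
  then have z: "\<forall>j\<in>{1..Suc n}. rr j = 0" using I rrR unfolding R_lin_indep_def by blast
  show "\<forall>j\<in>{1..n}. r j = 0"
  proof
    fix j assume j: "j \<in> {1..n}"
    then have "Suc j \<in> {1..Suc n}" by auto
    then have "rr (Suc j) = 0" using z by blast
    then show "r j = 0" using j unfolding rr_def by simp
  qed
qed

end


lemma HU:
  fixes s :: "'a::comm_ring_1 \<Rightarrow> 'a" and a :: "nat \<Rightarrow> 'a" and l i i0 :: nat
  assumes aut: "ring_aut s"
    and cond_i: "\<forall>i j b. 1 \<le> i \<and> i < j \<and> j \<le> l \<and> b dvd 1 \<longrightarrow> (a i - sconj s (a j) b) dvd 1"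
    and i: "i \<in> {1..l}" and i0: "i0 \<in> {1..l}" and ne: "i \<noteq> i0"
    and b0: "b0 dvd 1" and w: "w dvd 1"
  shows "Hop s (a i) (sconj s (a i0) b0) w dvd 1"
proof -
  define iw where "iw = unit_inv w"
  define ib where "ib = unit_inv b0"
  have e1: "w * iw = 1" unfolding iw_def using unit_inv_r[OF w] .
  have e2: "b0 * ib = 1" unfolding ib_def using unit_inv_r[OF b0] .
  have e3: "s w * s iw = 1" using ra_mult[OF aut, of w iw] e1 ra_one[OF aut] by simp
  have e4: "s b0 * s ib = 1" using ra_mult[OF aut, of b0 ib] e2 ra_one[OF aut] by simp
  have iwu: "iw dvd 1" by (rule dvdI[of _ _ w]) (simp add: e1[symmetric] mult.commute)
  have ibu: "ib dvd 1" by (rule dvdI[of _ _ b0]) (simp add: e2[symmetric] mult.commute)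
  have um: "x * y dvd 1" if "x dvd 1" "y dvd 1" for x y :: 'a
    using mult_dvd_mono[OF that] by simp
  have H: "Hop s (a i) (sconj s (a i0) b0) w = s w * a i - s b0 * a i0 * ib * w"
    unfolding Hop_def sconj_def ib_def by simp
  show ?thesis
  proof (cases "i < i0")
    case True
    define d where "d = b0 * iw"
    have du: "d dvd 1" unfolding d_def using b0 iwu by (rule um)
    have U: "(a i - sconj s (a i0) d) dvd 1" using cond_i i i0 True du by auto
    have "d * (ib * w) = (b0 * ib) * (w * iw)" unfolding d_def by (simp add: algebra_simps)
    then have id: "unit_inv d = ib * w" using e1 e2 by (intro unit_inv_eq) simp
    have sd: "s d = s b0 * s iw" unfolding d_def using ra_mult[OF aut] by simp
    have "s w * (a i - sconj s (a i0) d) = s w * a i - (s w * s iw) * s b0 * a i0 * ib * w"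
      unfolding sconj_def id sd by (simp add: algebra_simps)
    also have "\<dots> = Hop s (a i) (sconj s (a i0) b0) w" unfolding H e3 by simp
    finally have "Hop s (a i) (sconj s (a i0) b0) w = s w * (a i - sconj s (a i0) d)" by simp
    moreover have "s w dvd 1" using ra_unit[OF aut w] .
    ultimately show ?thesis using U um by simp
  next
    case False
    then have lt: "i0 < i" using ne by auto
    define d where "d = w * ib"
    have du: "d dvd 1" unfolding d_def using w ibu by (rule um)
    have U: "(a i0 - sconj s (a i) d) dvd 1" using cond_i i i0 lt du by auto
    have "d * (iw * b0) = (b0 * ib) * (w * iw)" unfolding d_def by (simp add: algebra_simps)
    then have id: "unit_inv d = iw * b0" using e1 e2 by (intro unit_inv_eq) simp
    have sd: "s d = s w * s ib" unfolding d_def using ra_mult[OF aut] by simp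
    have "- (s b0 * ib * w * (a i0 - sconj s (a i) d)) =
        (s b0 * s ib) * (b0 * ib) * (w * iw) * s w * a i - s b0 * a i0 * ib * w"
      unfolding sconj_def id sd by (simp add: algebra_simps)
    also have "\<dots> = Hop s (a i) (sconj s (a i0) b0) w" unfolding H e1 e2 e4 by simp
    finally have eq: "Hop s (a i) (sconj s (a i0) b0) w = - (s b0 * ib * w * (a i0 - sconj s (a i) d))" by simp
    have "s b0 dvd 1" using ra_unit[OF aut b0] .
    then have "s b0 * ib * w dvd 1" using ibu w um by simp
    then have "s b0 * ib * w * (a i0 - sconj s (a i) d) dvd 1" using U um by simp
    then show ?thesis unfolding eq by simp
  qed
qed


context
  fixes R :: "'a::comm_ring_1 set" and s :: "'a \<Rightarrow> 'a" and l :: nat and a :: "nat \<Rightarrow> 'a"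
  assumes sR: "subring_set R" and aut: "ring_aut s"
    and fixR: "\<forall>r\<in>R. s r = r" and fixS: "\<forall>x. s x = x \<longrightarrow> x \<in> R"
    and dec: "\<forall>y. \<exists>r\<in>R. \<exists>w. w dvd 1 \<and> y = r * w"
    and ann: "\<forall>y. \<not> y dvd 1 \<longrightarrow> (\<exists>r\<in>R. r \<noteq> 0 \<and> r * y = 0)"
    and a_units: "\<forall>i\<in>{1..l}. a i dvd 1"
    and cond_i: "\<forall>i j b. 1 \<le> i \<and> i < j \<and> j \<le> l \<and> b dvd 1 \<longrightarrow> (a i - sconj s (a j) b) dvd 1"
begin

lemmas ctxA = sR aut fixR fixS dec ann

lemma main_ind:
  "\<forall>ns \<beta> f. (\<Sum>i=1..l. ns i) = N \<longrightarrow> (\<forall>i\<in>{1..l}. R_lin_indep R (ns i) (\<beta> i)) \<longrightarrow>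
     (\<forall>k\<ge>N. f k = 0) \<longrightarrow> (\<forall>i\<in>{1..l}. \<forall>j\<in>{1..ns i}. ev s N f (a i) (\<beta> i j) = 0) \<longrightarrow>
     (\<forall>k. f k = 0)"
proof (induction N)
  case 0
  then show ?case by auto
next
  case (Suc N)
  show ?case
  proof (intro allI impI)
    fix ns \<beta> f k
    assume A1: "(\<Sum>i=1..l. ns i) = Suc N" and A2: "\<forall>i\<in>{1..l}. R_lin_indep R (ns i) (\<beta> i)"
      and A3: "\<forall>k\<ge>Suc N. f k = 0" and A4: "\<forall>i\<in>{1..l}. \<forall>j\<in>{1..ns i}. ev s (Suc N) f (a i) (\<beta> i j) = 0"
    obtain i0 where i0: "i0 \<in> {1..l}" "ns i0 \<noteq> 0"
    proof (rule ccontr)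
      assume "\<not> thesis"
      then have "\<forall>i\<in>{1..l}. ns i = 0" using that by blast
      then have "(\<Sum>i=1..l. ns i) = 0" by simp
      then show False using A1 by simp
    qed
    define b0 where "b0 = \<beta> i0 1"
    have b0u: "b0 dvd 1" unfolding b0_def
      using indep_unit[OF ctxA A2[rule_format, OF i0(1)]] i0(2) by simp
    define b where "b = sconj s (a i0) b0"
    have fN: "\<forall>k>N. f k = 0" using A3 by auto
    obtain Q r where Qr: "\<forall>k\<ge>N. Q k = 0" "\<forall>k. f k = shape s Q b k + (if k = 0 then r else 0)"
      "\<forall>x y. ev s (Suc N) f x y = ev s N Q x (Hop s x b y) + r * y"
      using ev_div[OF aut fN, of b] by blast
    have "Hop s (a i0) b b0 = s b0 * a i0 - s b0 * a i0 * (b0 * unit_inv b0)"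
      unfolding Hop_def b_def sconj_def by (simp add: algebra_simps)
    then have H0: "Hop s (a i0) b b0 = 0" using unit_inv_r[OF b0u] by simp
    have "1 \<in> {1..ns i0}" using i0 by auto
    then have "ev s (Suc N) f (a i0) b0 = 0" using A4 i0 unfolding b0_def by blast
    then have "r * b0 = 0" using Qr(3) H0 ev_zero[OF aut] by simp
    then have r0: "r = 0" using unit_inv_r[OF b0u] by (metis mult.assoc mult_1_right mult_zero_left)
    define ns' where "ns' = ns(i0 := ns i0 - 1)"
    define \<beta>' where "\<beta>' = (\<lambda>i j. if i = i0 then Hop s (a i) b (\<beta> i (Suc j)) else Hop s (a i) b (\<beta> i j))"
    have S1: "(\<Sum>i=1..l. ns i) = ns i0 + (\<Sum>i\<in>{1..l} - {i0}. ns i)"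
      using i0 by (intro sum.remove) auto
    have S2: "(\<Sum>i=1..l. ns' i) = ns' i0 + (\<Sum>i\<in>{1..l} - {i0}. ns' i)"
      using i0 by (intro sum.remove) auto
    have S3: "(\<Sum>i\<in>{1..l} - {i0}. ns' i) = (\<Sum>i\<in>{1..l} - {i0}. ns i)"
      unfolding ns'_def by (intro sum.cong) auto
    have B1: "(\<Sum>i=1..l. ns' i) = N" using S1 S2 S3 A1 i0(2) unfolding ns'_def by simp
    have B2: "\<forall>i\<in>{1..l}. R_lin_indep R (ns' i) (\<beta>' i)"
    proof
      fix i assume i: "i \<in> {1..l}"
      show "R_lin_indep R (ns' i) (\<beta>' i)"
      proof (cases "i = i0")
        case True
        have eqn: "ns i0 = Suc (ns i0 - 1)" using i0 by simp
        have "R_lin_indep R (Suc (ns i0 - 1)) (\<beta> i0)" using A2 i0 eqn by metis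
        from indep_conj[OF ctxA this a_units[rule_format, OF i0(1)]] b0u
        have "R_lin_indep R (ns i0 - 1) (\<lambda>j. Hop s (a i0) b (\<beta> i0 (Suc j)))"
          unfolding b_def b0_def by simp
        then show ?thesis using True unfolding ns'_def \<beta>'_def by simp
      next
        case False
        have U: "\<forall>w. w dvd 1 \<longrightarrow> Hop s (a i) b w dvd 1"
          unfolding b_def using HU[OF aut cond_i i i0(1) False b0u] by blast
        have K: "\<forall>g. Hop s (a i) b g = 0 \<longrightarrow> g = 0"
          using ker_triv[OF ctxA U] by blast
        have "R_lin_indep R (ns i) (\<lambda>j. Hop s (a i) b (\<beta> i j))"
          using indep_triv[OF ctxA A2[rule_format, OF i] K] .
        then show ?thesis using False unfolding ns'_def \<beta>'_def by simp
      qed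
    qed
    have B4: "\<forall>i\<in>{1..l}. \<forall>j\<in>{1..ns' i}. ev s N Q (a i) (\<beta>' i j) = 0"
    proof (intro ballI)
      fix i j assume i: "i \<in> {1..l}" and j: "j \<in> {1..ns' i}"
      show "ev s N Q (a i) (\<beta>' i j) = 0"
      proof (cases "i = i0")
        case True
        then have "Suc j \<in> {1..ns i}" using j unfolding ns'_def by auto
        then have "ev s (Suc N) f (a i) (\<beta> i (Suc j)) = 0" using A4 i by blast
        then show ?thesis using Qr(3) r0 True unfolding \<beta>'_def by simp
      next
        case False
        then have "j \<in> {1..ns i}" using j unfolding ns'_def by auto
        then have "ev s (Suc N) f (a i) (\<beta> i j) = 0" using A4 i by blast
        then show ?thesis using Qr(3) r0 False unfolding \<beta>'_def by simp
      qed
    qed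
    have Q0: "\<forall>k. Q k = 0" using Suc.IH B1 B2 Qr(1) B4 by blast
    show "f k = 0" using Qr(2) Q0 r0 unfolding shape_def by simp
  qed
qed

end


lemma ev_diff: "ev s N (\<lambda>k. f k - g k) x y = ev s N f x y - ev s N g x y"
  unfolding ev_def by (simp add: sum_subtractf algebra_simps)

lemma coeff_Poly_map: "coeff (Poly (map g [0..<n])) k = (if k < n then g k else 0)"
  by (simp add: nth_default_def)

theorem theorem4:
  fixes R :: "'a::{comm_ring_1,finite} set" and h :: "'a poly" and \<sigma> :: "'a \<Rightarrow> 'a"
    and l :: nat and ns :: "nat \<Rightarrow> nat" and a :: "nat \<Rightarrow> 'a"
    and \<beta> :: "nat \<Rightarrow> nat \<Rightarrow> 'a" and c :: "nat \<Rightarrow> nat \<Rightarrow> 'a"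
  assumes ctx: "galois_ctx R h \<sigma>"
    and a_units: "\<forall>i\<in>{1..l}. a i dvd 1"
    and cond_i: "\<forall>i j b. 1 \<le> i \<and> i < j \<and> j \<le> l \<and> b dvd 1 \<longrightarrow> (a i - sconj \<sigma> (a j) b) dvd 1"
    and cond_ii: "\<forall>i\<in>{1..l}. R_lin_indep R (ns i) (\<beta> i)"
  shows "\<exists>!F :: 'a poly. (\<forall>k \<ge> (\<Sum>i=1..l. ns i). coeff F k = 0) \<and>
           (\<forall>i\<in>{1..l}. \<forall>j\<in>{1..ns i}. skew_eval \<sigma> F (a i) (\<beta> i j) = c i j)"
proof -
  have cr: "chain_ring R" and hq: "is_quot_by R h" and gal: "\<sigma> \<in> galois_group R"
    and fx: "{s. \<sigma> s = s} = R"
    using ctx unfolding galois_ctx_def by auto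
  have sR: "subring_set R" using chain_sub[OF cr] .
  have aut: "ring_aut \<sigma>" and fixR: "\<forall>r\<in>R. \<sigma> r = r" using gal unfolding galois_group_def by auto
  have fixS: "\<forall>x. \<sigma> x = x \<longrightarrow> x \<in> R" using fx by auto
  have dec: "\<forall>y. \<exists>r\<in>R. \<exists>w. w dvd 1 \<and> y = r * w" using decomp[OF cr hq] by blast
  have ann: "\<forall>y. \<not> y dvd 1 \<longrightarrow> (\<exists>r\<in>R. r \<noteq> 0 \<and> r * y = 0)" using annih[OF cr hq] by blast
  note MI = main_ind[OF sR aut fixR fixS dec ann a_units cond_i]
  define n where "n = (\<Sum>i=1..l. ns i)"
  define Idx where "Idx = Sigma {1..l} (\<lambda>i. {1..ns i})"
  define PP where "PP = {F :: 'a poly. \<forall>k\<ge>n. coeff F k = 0}"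
  define Evm where "Evm F = restrict (\<lambda>p. skew_eval \<sigma> F (a (fst p)) (\<beta> (fst p) (snd p))) Idx" for F
  have inj: "F = G" if F: "F \<in> PP" and G: "G \<in> PP" and e: "Evm F = Evm G" for F G
  proof -
    define f where "f k = coeff F k - coeff G k" for k
    have "\<forall>k\<ge>n. f k = 0" using F G unfolding PP_def f_def by auto
    moreover have "\<forall>i\<in>{1..l}. \<forall>j\<in>{1..ns i}. ev \<sigma> n f (a i) (\<beta> i j) = 0"
    proof (intro ballI)
      fix i j assume i: "i \<in> {1..l}" and j: "j \<in> {1..ns i}"
      then have "(i, j) \<in> Idx" unfolding Idx_def by auto
      then have "Evm F (i, j) = Evm G (i, j)" using e by simp
      then have "skew_eval \<sigma> F (a i) (\<beta> i j) = skew_eval \<sigma> G (a i) (\<beta> i j)"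
        using \<open>(i, j) \<in> Idx\<close> unfolding Evm_def by simp
      then have "ev \<sigma> n (coeff F) (a i) (\<beta> i j) = ev \<sigma> n (coeff G) (a i) (\<beta> i j)"
        using F G skew_ev[of n F] skew_ev[of n G] unfolding PP_def by auto
      then show "ev \<sigma> n f (a i) (\<beta> i j) = 0" unfolding f_def using ev_diff[of \<sigma> n "coeff F" "coeff G"] by simp
    qed
    ultimately have "\<forall>k. f k = 0" using MI[of n] cond_ii unfolding n_def by blast
    then show "F = G" unfolding f_def by (intro poly_eqI) simp
  qed
  define TT where "TT = PiE Idx (\<lambda>_. UNIV :: 'a set)"
  define DD where "DD = PiE {..<n} (\<lambda>_. UNIV :: 'a set)"
  define Pm where "Pm g = Poly (map g [0..<n])" for g :: "nat \<Rightarrow> 'a"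
  have PmP: "Pm g \<in> PP" for g unfolding PP_def Pm_def by (simp add: nth_default_def)
  have finIdx: "finite Idx" unfolding Idx_def by auto
  have cardIdx: "card Idx = n" unfolding Idx_def n_def by (simp add: card_SigmaI)
  have cT: "card TT = card (UNIV :: 'a set) ^ n" unfolding TT_def using finIdx cardIdx by (simp add: card_PiE)
  have cD: "card DD = card (UNIV :: 'a set) ^ n" unfolding DD_def by (simp add: card_PiE)
  have finT: "finite TT" unfolding TT_def using finIdx by (simp add: finite_PiE)
  have injD: "inj_on (\<lambda>g. Evm (Pm g)) DD"
  proof
    fix g1 g2 assume g1: "g1 \<in> DD" and g2: "g2 \<in> DD" and e: "Evm (Pm g1) = Evm (Pm g2)"
    have "Pm g1 = Pm g2" using inj[OF PmP PmP e] .
    then have "\<forall>k. coeff (Pm g1) k = coeff (Pm g2) k" by simp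
    then have "\<forall>k<n. g1 k = g2 k" unfolding Pm_def coeff_Poly_map by metis
    then show "g1 = g2" using g1 g2 unfolding DD_def by (intro PiE_ext) auto
  qed
  have sub: "(\<lambda>g. Evm (Pm g)) ` DD \<subseteq> TT" unfolding TT_def Evm_def by auto
  have imgT: "(\<lambda>g. Evm (Pm g)) ` DD = TT"
    using card_subset_eq[OF finT sub] card_image[OF injD] cD cT by simp
  define c' where "c' = restrict (\<lambda>p. c (fst p) (snd p)) Idx"
  have "c' \<in> TT" unfolding c'_def TT_def by auto
  then obtain g where g: "Evm (Pm g) = c'" using imgT by auto
  have exF: "Pm g \<in> PP \<and> (\<forall>i\<in>{1..l}. \<forall>j\<in>{1..ns i}. skew_eval \<sigma> (Pm g) (a i) (\<beta> i j) = c i j)"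
  proof (intro conjI ballI)
    show "Pm g \<in> PP" by (rule PmP)
    fix i j assume "i \<in> {1..l}" "j \<in> {1..ns i}"
    then have ij: "(i, j) \<in> Idx" unfolding Idx_def by auto
    have "Evm (Pm g) (i, j) = c' (i, j)" using g by simp
    then show "skew_eval \<sigma> (Pm g) (a i) (\<beta> i j) = c i j" using ij unfolding Evm_def c'_def by simp
  qed
  show ?thesis
  proof (rule ex1I[of _ "Pm g"])
    show "(\<forall>k\<ge>(\<Sum>i=1..l. ns i). coeff (Pm g) k = 0) \<and>
        (\<forall>i\<in>{1..l}. \<forall>j\<in>{1..ns i}. skew_eval \<sigma> (Pm g) (a i) (\<beta> i j) = c i j)"
      using exF unfolding PP_def n_def by auto
  next
    fix F assume F: "(\<forall>k\<ge>(\<Sum>i=1..l. ns i). coeff F k = 0) \<and>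
        (\<forall>i\<in>{1..l}. \<forall>j\<in>{1..ns i}. skew_eval \<sigma> F (a i) (\<beta> i j) = c i j)"
    then have FP: "F \<in> PP" unfolding PP_def n_def by auto
    have "Evm F = Evm (Pm g)"
    proof
      fix p show "Evm F p = Evm (Pm g) p"
      proof (cases "p \<in> Idx")
        case True
        then obtain i j where p: "p = (i, j)" "i \<in> {1..l}" "j \<in> {1..ns i}" unfolding Idx_def by auto
        then show ?thesis using F exF True unfolding Evm_def by simp
      next
        case False then show ?thesis unfolding Evm_def by simp
      qed
    qed
    then show "F = Pm g" using inj[OF FP PmP] by simp
  qed
qed

end
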